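(* Let $\mathbb{F}$ be a field with $\mathrm{char}(\mathbb{F})\neq 2,3$. Every proper ideal of $\hat{\mathcal{H}}$ is contained in the radical $R(\hat{\mathcal{H}})$; in particular, no proper ideal of $\hat{\mathcal{H}}$ contains any of the axes $a_i$, $i\in\mathbb{Z}$.
   Context: Notation: $\mathbb{N}=\{1,2,3,\dots\}$, $3\mathbb{N}=\{3,6,9,\dots\}$; for $r\in\mathbb{Z}$, $\bar r=r+3\mathbb{Z}\in\mathbb{Z}_3$. The algebra $\hat{\mathcal{H}}$ is the commutative $\mathbb{F}$-algebra with basis $\{a_i:i\in\mathbb{Z}\}\cup\{s_j:j\in\mathbb{N}\}\cup\{p_{\bar r,k}:\bar r\in\{\bar1,\bar2\},\ k\in 3\mathbb{N}\}$, where $s_0=0$, $p_{\bar r,j}=0$ for all $\bar r$ whenever $j\notin 3\mathbb{N}$, $p_{\bar 0,j}=-p_{\bar1,j}-p_{\bar2,j}$, $z_{\bar r,j}=p_{\bar r+\bar1,j}-p_{\bar r-\bar1,j}$, and for $i,i'\in\mathbb{Z}$, $j,l\in\mathbb{N}$, $h,k\in3\mathbb{N}$, $\bar r,\bar t\in\mathbb{Z}_3$: (H1) $a_ia_{i'}=\tfrac12(a_i+a_{i'})+s_{|i-i'|}+z_{\bar\imath,|i-i'|}$; (H2) $a_is_j=-\tfrac34a_i+\tfrac38(a_{i-j}+a_{i+j})+\tfrac32 s_j-z_{\bar\imath,j}$; (H3) $a_ip_{\bar r,k}=\tfrac32p_{\bar r,k}-p_{-(\bar\imath+\bar r),k}$;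 (H4) $s_js_l=\tfrac34(s_j+s_l)-\tfrac38(s_{|j-l|}+s_{j+l})$; (H5) $s_jp_{\bar r,k}=\tfrac34(p_{\bar r,j}+p_{\bar r,k})-\tfrac38(p_{\bar r,|j-k|}+p_{\bar r,j+k})$; (H6) $p_{\bar r,h}p_{\bar t,k}=\tfrac14(z_{-(\bar r+\bar t),h}+z_{-(\bar r+\bar t),k})-\tfrac18(z_{-(\bar r+\bar t),|h-k|}+z_{-(\bar r+\bar t),h+k})$. The $a_i$ are the axes of $\hat{\mathcal{H}}$. The radical $R(\hat{\mathcal{H}})$ is the unique largest ideal of $\hat{\mathcal{H}}$ containing none of the axes $a_i$. *)

theory Defs
  imports Main "HOL-Library.Function_Algebras"
begin

text \<open>Basis indices of the algebra H-hat:
  HA i  stands for the axis a_i (i integer),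
  HS j  stands for s_j (only j >= 1 is a basis element),
  HP False k stands for p_{1,k}, HP True k stands for p_{2,k} (only k in 3N is a basis element).\<close>

datatype hidx = HA int | HS nat | HP bool nat

definition valid_idx :: "hidx \<Rightarrow> bool" where
  "valid_idx b = (case b of HA i \<Rightarrow> True | HS j \<Rightarrow> j \<ge> 1 | HP r k \<Rightarrow> k \<ge> 1 \<and> 3 dvd k)"

definition hsupp :: "(hidx \<Rightarrow> 'a::zero) \<Rightarrow> hidx set" where
  "hsupp x = {b. x b \<noteq> 0}"

definition Hcarrier :: "(hidx \<Rightarrow> 'a::field) set" where
  "Hcarrier = {x. finite (hsupp x) \<and> (\<forall>b. x b \<noteq> 0 \<longrightarrow> valid_idx b)}"

definition hscale :: "'a::field \<Rightarrow> (hidx \<Rightarrow> 'a) \<Rightarrow> (hidx \<Rightarrow> 'a)" where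
  "hscale c x = (\<lambda>b. c * x b)"

definition hsingle :: "hidx \<Rightarrow> (hidx \<Rightarrow> 'a::field)" where
  "hsingle b = (\<lambda>c. if c = b then 1 else 0)"

text \<open>The named elements a_i, s_j (s_0 = 0), p_{r,k} (r taken mod 3; zero unless k in 3N;
  p_{0,k} = - p_{1,k} - p_{2,k}) and z_{r,j} = p_{r+1,j} - p_{r-1,j}.\<close>

definition ha :: "int \<Rightarrow> (hidx \<Rightarrow> 'a::field)" where
  "ha i = hsingle (HA i)"

definition hs :: "nat \<Rightarrow> (hidx \<Rightarrow> 'a::field)" where
  "hs j = (if j = 0 then 0 else hsingle (HS j))"

definition hp :: "int \<Rightarrow> nat \<Rightarrow> (hidx \<Rightarrow> 'a::field)" where
  "hp r k = (if k \<ge> 1 \<and> 3 dvd k then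
      (if r mod 3 = 1 then hsingle (HP False k)
       else if r mod 3 = 2 then hsingle (HP True k)
       else - hsingle (HP False k) - hsingle (HP True k))
    else 0)"

definition hz :: "int \<Rightarrow> nat \<Rightarrow> (hidx \<Rightarrow> 'a::field)" where
  "hz r j = hp (r + 1) j - hp (r - 1) j"

definition pidx :: "bool \<Rightarrow> int" where
  "pidx r = (if r then 2 else 1)"

text \<open>Products of basis elements, following (H1)-(H6) (and commutativity).\<close>

fun hmb :: "hidx \<Rightarrow> hidx \<Rightarrow> (hidx \<Rightarrow> 'a::field)" where
  "hmb (HA i) (HA i') =
     hscale (1/2) (ha i + ha i') + hs (nat \<bar>i - i'\<bar>) + hz i (nat \<bar>i - i'\<bar>)"
| "hmb (HA i) (HS j) =
     hscale (-3/4) (ha i) + hscale (3/8) (ha (i - int j) + ha (i + int j))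
     + hscale (3/2) (hs j) - hz i j"
| "hmb (HS j) (HA i) =
     hscale (-3/4) (ha i) + hscale (3/8) (ha (i - int j) + ha (i + int j))
     + hscale (3/2) (hs j) - hz i j"
| "hmb (HA i) (HP r k) = hscale (3/2) (hp (pidx r) k) - hp (- (i + pidx r)) k"
| "hmb (HP r k) (HA i) = hscale (3/2) (hp (pidx r) k) - hp (- (i + pidx r)) k"
| "hmb (HS j) (HS l) =
     hscale (3/4) (hs j + hs l) - hscale (3/8) (hs (nat \<bar>int j - int l\<bar>) + hs (j + l))"
| "hmb (HS j) (HP r k) =
     hscale (3/4) (hp (pidx r) j + hp (pidx r) k)
     - hscale (3/8) (hp (pidx r) (nat \<bar>int j - int k\<bar>) + hp (pidx r) (j + k))"
| "hmb (HP r k) (HS j) =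
     hscale (3/4) (hp (pidx r) j + hp (pidx r) k)
     - hscale (3/8) (hp (pidx r) (nat \<bar>int j - int k\<bar>) + hp (pidx r) (j + k))"
| "hmb (HP r h) (HP t k) =
     hscale (1/4) (hz (- (pidx r + pidx t)) h + hz (- (pidx r + pidx t)) k)
     - hscale (1/8) (hz (- (pidx r + pidx t)) (nat \<bar>int h - int k\<bar>)
                     + hz (- (pidx r + pidx t)) (h + k))"

definition hmul :: "(hidx \<Rightarrow> 'a::field) \<Rightarrow> (hidx \<Rightarrow> 'a) \<Rightarrow> (hidx \<Rightarrow> 'a)" where
  "hmul x y = (\<Sum>b\<in>hsupp x. \<Sum>c\<in>hsupp y. hscale (x b * y c) (hmb b c))"

definition hideal :: "(hidx \<Rightarrow> 'a::field) set \<Rightarrow> bool" where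
  "hideal I \<longleftrightarrow> I \<subseteq> Hcarrier \<and> 0 \<in> I
     \<and> (\<forall>x\<in>I. \<forall>y\<in>I. x + y \<in> I)
     \<and> (\<forall>c. \<forall>x\<in>I. hscale c x \<in> I)
     \<and> (\<forall>x\<in>I. \<forall>y\<in>Hcarrier. hmul x y \<in> I \<and> hmul y x \<in> I)"

definition hradical :: "(hidx \<Rightarrow> 'a::field) set" where
  "hradical = (THE R. hideal R \<and> (\<forall>i. ha i \<notin> R)
      \<and> (\<forall>J. hideal J \<and> (\<forall>i. ha i \<notin> J) \<longrightarrow> J \<subseteq> R))"

end

theory Submission
  imports Defs
begin


definition fs :: "(hidx \<Rightarrow> 'a::field) \<Rightarrow> bool" where "fs x = finite (hsupp x)"

lemma sum_fun_apply: "(sum f A) x = sum (\<lambda>a. f a x) A"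
  by (induction A rule: infinite_finite_induct) auto

lemma hscale_apply[simp]: "hscale c x b = c * x b" by (simp add: hscale_def)
lemma hsingle_apply: "hsingle b c = (if c = b then 1 else 0)" by (simp add: hsingle_def)
lemma hsupp_hsingle[simp]: "hsupp (hsingle b :: hidx \<Rightarrow> 'a::field) = {b}"
  by (auto simp: hsupp_def hsingle_def)
lemma hscale_zero[simp]: "hscale 0 v = 0" by (simp add: fun_eq_iff)
lemma hscale_zero2[simp]: "hscale c 0 = 0" by (simp add: fun_eq_iff)
lemma hscale_one[simp]: "hscale 1 v = v" by (simp add: fun_eq_iff)
lemma hscale_add: "hscale (a+b) v = hscale a v + hscale b v" by (simp add: fun_eq_iff algebra_simps)
lemma hscale_add2: "hscale c (v + w) = hscale c v + hscale c w" by (simp add: fun_eq_iff algebra_simps)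
lemma hscale_diff2: "hscale c (v - w) = hscale c v - hscale c w" by (simp add: fun_eq_iff algebra_simps)
lemma hscale_uminus2: "hscale c (- w) = - hscale c w" by (simp add: fun_eq_iff algebra_simps)
lemma hscale_mult: "hscale (a*b) v = hscale a (hscale b v)" by (simp add: fun_eq_iff algebra_simps)
lemma hscale_sum: "hscale c (sum f A) = sum (\<lambda>a. hscale c (f a)) A"
  by (simp add: fun_eq_iff sum_fun_apply sum_distrib_left)

lemma fs_zero[simp]: "fs 0" by (simp add: fs_def hsupp_def)
lemma fs_add[simp]: "fs x \<Longrightarrow> fs y \<Longrightarrow> fs (x + y)"
  unfolding fs_def by (rule finite_subset[of _ "hsupp x \<union> hsupp y"]) (auto simp: hsupp_def)
lemma fs_uminus[simp]: "fs x \<Longrightarrow> fs (- x)"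
  unfolding fs_def by (simp add: hsupp_def)
lemma fs_diff[simp]: "fs x \<Longrightarrow> fs y \<Longrightarrow> fs (x - y)"
  unfolding fs_def by (rule finite_subset[of _ "hsupp x \<union> hsupp y"]) (auto simp: hsupp_def)
lemma fs_scale[simp]: "fs x \<Longrightarrow> fs (hscale c x)"
  unfolding fs_def by (rule finite_subset[of _ "hsupp x"]) (auto simp: hsupp_def)
lemma fs_sum: "(\<And>a. a \<in> A \<Longrightarrow> fs (f a)) \<Longrightarrow> fs (sum f A)"
  by (induction A rule: infinite_finite_induct) auto
lemma fs_hsingle[simp]: "fs (hsingle b)" by (simp add: fs_def)
lemma fs_ha[simp]: "fs (ha i)" by (simp add: ha_def)
lemma fs_hs[simp]: "fs (hs j)" by (simp add: hs_def)
lemma fs_hp[simp]: "fs (hp r k)" by (simp add: hp_def)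
lemma fs_hz[simp]: "fs (hz r k)" by (simp add: hz_def)

lemma expand: "fs x \<Longrightarrow> x = (\<Sum>b\<in>hsupp x. hscale (x b) (hsingle b))"
  unfolding fs_def
  by (auto simp: fun_eq_iff sum_fun_apply hsingle_def if_distrib cong: if_cong) (auto simp: hsupp_def)

definition Lm :: "int \<Rightarrow> (hidx \<Rightarrow> 'a::field) \<Rightarrow> (hidx \<Rightarrow> 'a)" where
 "Lm i x = (\<Sum>c\<in>hsupp x. hscale (x c) (hmb (HA i) c))"

lemma Lm_super: "finite T \<Longrightarrow> hsupp x \<subseteq> T \<Longrightarrow> Lm i x = (\<Sum>c\<in>T. hscale (x c) (hmb (HA i) c))"
  unfolding Lm_def by (rule sum.mono_neutral_left) (auto simp: hsupp_def)

lemma Lm_add: "fs x \<Longrightarrow> fs y \<Longrightarrow> Lm i (x+y) = Lm i x + Lm i y"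
proof -
  assume a: "fs x" "fs y"
  let ?T = "hsupp x \<union> hsupp y"
  have f: "finite ?T" using a by (simp add: fs_def)
  show ?thesis
  proof -
    have s: "hsupp x \<subseteq> ?T" "hsupp y \<subseteq> ?T" "hsupp (x+y) \<subseteq> ?T" by (auto simp: hsupp_def)
    show ?thesis
      unfolding Lm_super[OF f s(1)] Lm_super[OF f s(2)] Lm_super[OF f s(3)]
      by (simp add: hscale_add sum.distrib)
  qed
qed

lemma Lm_scale: "fs x \<Longrightarrow> Lm i (hscale c x) = hscale c (Lm i x)"
proof -
  assume a: "fs x"
  have f: "finite (hsupp x)" using a by (simp add: fs_def)
  show ?thesis
  proof -
    have s: "hsupp x \<subseteq> hsupp x" "hsupp (hscale c x) \<subseteq> hsupp x" by (auto simp: hsupp_def)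
    show ?thesis
      unfolding Lm_super[OF f s(1)] Lm_super[OF f s(2)]
      by (simp add: hscale_mult hscale_sum)
  qed
qed

lemma uminus_scale: "- x = hscale (-1) x" by (simp add: fun_eq_iff)
lemma diff_scale: "x - y = x + hscale (-1) y" by (simp add: fun_eq_iff)

lemma Lm_uminus: "fs x \<Longrightarrow> Lm i (- x) = - Lm i x"
  by (simp add: uminus_scale Lm_scale)
lemma Lm_diff: "fs x \<Longrightarrow> fs y \<Longrightarrow> Lm i (x - y) = Lm i x - Lm i y"
  by (simp add: diff_scale Lm_add Lm_scale)
lemma Lm_zero[simp]: "Lm i 0 = 0" by (simp add: Lm_def hsupp_def)

lemma Lm_hsingle: "Lm i (hsingle b) = hmb (HA i) b"
  by (simp add: Lm_def hsingle_apply)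

lemma hmul_ha: "fs x \<Longrightarrow> hmul (ha i) x = Lm i x"
  by (simp add: hmul_def ha_def Lm_def hsingle_apply)

lemma Lm_ha: "Lm i (ha j) = hscale (1/2) (ha i + ha j) + hs (nat \<bar>i - j\<bar>) + hz i (nat \<bar>i - j\<bar>)"
  by (simp add: ha_def Lm_hsingle)

lemma hp0[simp]: "hp r 0 = 0" by (simp add: hp_def)
lemma hz0[simp]: "hz r 0 = 0" by (simp add: hz_def)
lemma hs0[simp]: "hs 0 = 0" by (simp add: hs_def)

lemma nz: "(2::'a::field) \<noteq> 0 \<Longrightarrow> (4::'a) \<noteq> 0 \<and> (8::'a) \<noteq> 0 \<and> (16::'a) \<noteq> 0 \<and> (32::'a) \<noteq> 0 \<and> (64::'a) \<noteq> 0 \<and> (128::'a) \<noteq> 0 \<and> (256::'a) \<noteq> 0"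
proof -
  assume a: "(2::'a) \<noteq> 0"
  have "(2::'a)^n \<noteq> 0" for n using a by simp
  from this[of 2] this[of 3] this[of 4] this[of 5] this[of 6] this[of 7] this[of 8] show ?thesis by simp
qed

lemma Lm_hs:
  assumes c2: "(2::'a::field) \<noteq> 0"
  shows "Lm i (hs j :: hidx \<Rightarrow> 'a) = hscale (-3/4) (ha i) + hscale (3/8) (ha (i - int j) + ha (i + int j))
     + hscale (3/2) (hs j) - hz i j"
proof (cases "j = 0")
  case True
  then show ?thesis using c2 nz[OF c2] by (simp add: fun_eq_iff field_simps)
next
  case False
  then show ?thesis by (simp add: hs_def Lm_hsingle)
qed




lemma hp_cong: "a mod 3 = b mod 3 \<Longrightarrow> hp a k = hp b k"
  by (simp add: hp_def)

lemma hp_three: "hp a k + hp (a+1) k + (hp (a+2) k :: hidx \<Rightarrow> 'a::field) = 0"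
proof -
  have c: "a mod 3 = 0 \<or> a mod 3 = 1 \<or> a mod 3 = 2" by presburger
  moreover have "a mod 3 = 0 \<Longrightarrow> (a+1) mod 3 = 1 \<and> (a+2) mod 3 = 2" by presburger
  moreover have "a mod 3 = 1 \<Longrightarrow> (a+1) mod 3 = 2 \<and> (a+2) mod 3 = 0" by presburger
  moreover have "a mod 3 = 2 \<Longrightarrow> (a+1) mod 3 = 0 \<and> (a+2) mod 3 = 1" by presburger
  ultimately show ?thesis by (auto simp: hp_def)
qed

lemma Lm_hp:
  "Lm i (hp r k :: hidx \<Rightarrow> 'a::field) = hscale (3/2) (hp r k) - hp (- (i + r)) k"
proof (cases "k \<ge> 1 \<and> 3 dvd k")
  case False
  then have "hp r k = (0 :: hidx \<Rightarrow> 'a)" "hp (-(i+r)) k = (0 :: hidx \<Rightarrow> 'a)" unfolding hp_def by (meson if_not_P)+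
  then show ?thesis by simp
next
  case True
  define P1 :: "hidx \<Rightarrow> 'a" where "P1 = hsingle (HP False k)"
  define P2 :: "hidx \<Rightarrow> 'a" where "P2 = hsingle (HP True k)"
  have h1: "hp 1 k = P1" using True by (simp add: hp_def P1_def)
  have h2: "hp 2 k = P2" using True by (simp add: hp_def P2_def)
  have L1: "Lm i P1 = hscale (3/2) P1 - hp (-(i+1)) k"
    using h1 by (simp add: P1_def Lm_hsingle pidx_def)
  have L2: "Lm i P2 = hscale (3/2) P2 - hp (-(i+2)) k"
    using h2 by (simp add: P2_def Lm_hsingle pidx_def)
  have cr: "r mod 3 = 0 \<or> r mod 3 = 1 \<or> r mod 3 = 2" by presburger
  moreover {
    assume r: "r mod 3 = 1"
    have e1: "hp r k = P1" by (rule trans[OF hp_cong h1]) (simp add: r)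
    have e2: "hp (-(i+r)) k = hp (-(i+1)) k" using r by (intro hp_cong) presburger
    have ?thesis unfolding e1 e2 by (rule L1) }
  moreover {
    assume r: "r mod 3 = 2"
    have e1: "hp r k = P2" by (rule trans[OF hp_cong h2]) (simp add: r)
    have e2: "hp (-(i+r)) k = hp (-(i+2)) k" using r by (intro hp_cong) presburger
    have ?thesis unfolding e1 e2 by (rule L2) }
  moreover {
    assume r: "r mod 3 = 0"
    have e1: "hp r k = - P1 - P2" using r True by (simp add: hp_def P1_def P2_def)
    have e2: "hp (-(i+r)) k = hp (-(i+2) + 2) k" using r by (intro hp_cong) presburger
    have e3: "hp (-(i+1)) k = hp (-(i+2) + 1) k" by (intro hp_cong) presburger
    have C: "hp (-(i+r)) k = - hp (-(i+1)) k - hp (-(i+2)) k"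
      using hp_three[of "-(i+2)" k] unfolding e2 e3[symmetric]
      by (simp add: algebra_simps eq_neg_iff_add_eq_0)
    have "Lm i (hp r k) = - Lm i P1 - Lm i P2" unfolding e1 by (simp add: Lm_diff Lm_uminus P1_def P2_def)
    also have "... = hscale (3/2) (hp r k) - hp (-(i+r)) k"
      unfolding L1 L2 C e1 hscale_diff2 hscale_uminus2 by (simp add: algebra_simps)
    finally have ?thesis .
  }
  ultimately show ?thesis by metis
qed


lemma Lm_A0: "(2::'a::field) \<noteq> 0 \<Longrightarrow> Lm i (ha i :: hidx \<Rightarrow> 'a) = ha i"
  by (insert nz[where 'a='a], simp add: Lm_ha fun_eq_iff field_simps)

lemma Lm_z: assumes c2: "(2::'a::field) \<noteq> 0" shows "Lm i (hz i d :: hidx \<Rightarrow> 'a::field) = hscale (5/2) (hz i d)"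
proof -
  have a: "hp (- (i + (i + 1))) d = (hp (i - 1) d :: hidx \<Rightarrow> 'a)" by (intro hp_cong) presburger
  have b: "hp (- (i + (i - 1))) d = (hp (i + 1) d :: hidx \<Rightarrow> 'a)" by (intro hp_cong) presburger
  show ?thesis unfolding hz_def
    by (simp only: Lm_diff fs_hp Lm_hp a b) (insert c2 nz[OF c2], simp add: fun_eq_iff field_simps)
qed

lemma Lm_pplus: "(2::'a::field) \<noteq> 0 \<Longrightarrow> Lm i (hp r k + hp (-(i+r)) k :: hidx \<Rightarrow> 'a) = hscale (1/2) (hp r k + hp (-(i+r)) k)"
  by (insert nz[where 'a='a], simp add: Lm_add Lm_hp fun_eq_iff field_simps)

lemma Lm_pminus: "(2::'a::field) \<noteq> 0 \<Longrightarrow> Lm i (hp r k - hp (-(i+r)) k :: hidx \<Rightarrow> 'a::field) = hscale (5/2) (hp r k - hp (-(i+r)) k)"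
  by (insert nz[where 'a='a], simp add: Lm_diff Lm_hp fun_eq_iff field_simps)

lemma Lm_adiff: "Lm i (ha j - ha (2*i - j) :: hidx \<Rightarrow> 'a::field) = hscale (1/2) (ha j - ha (2*i - j))"
proof -
  have "nat \<bar>i - (2*i - j)\<bar> = nat \<bar>i - j\<bar>" by simp
  then show ?thesis by (simp add: Lm_diff Lm_ha fun_eq_iff algebra_simps)
qed

definition hW :: "int \<Rightarrow> nat \<Rightarrow> (hidx \<Rightarrow> 'a::field)" where
  "hW i d = ha (i + int d) + ha (i - int d)"
definition hv0 :: "int \<Rightarrow> nat \<Rightarrow> (hidx \<Rightarrow> 'a::field)" where
  "hv0 i d = hscale 3 (hW i d) - hscale 4 (hs d) - hscale 6 (ha i) - hscale 4 (hz i d)"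
definition hv2 :: "int \<Rightarrow> nat \<Rightarrow> (hidx \<Rightarrow> 'a::field)" where
  "hv2 i d = hW i d + hscale 4 (hs d) - hscale 2 (ha i) + hscale 4 (hz i d)"

lemma fs_hW[simp]: "fs (hW i d)" by (simp add: hW_def)
lemma fs_hv0[simp]: "fs (hv0 i d)" by (simp add: hv0_def)
lemma fs_hv2[simp]: "fs (hv2 i d)" by (simp add: hv2_def)

lemma Lm_W: "(2::'a::field) \<noteq> 0 \<Longrightarrow> Lm i (hW i d :: hidx \<Rightarrow> 'a::field) = ha i + hscale (1/2) (hW i d) + hscale 2 (hs d) + hscale 2 (hz i d)"
  by (insert nz[where 'a='a], simp add: hW_def Lm_add Lm_ha fun_eq_iff algebra_simps)

lemma Lm_S: "(2::'a::field) \<noteq> 0 \<Longrightarrow> Lm i (hs d :: hidx \<Rightarrow> 'a) = hscale (-3/4) (ha i) + hscale (3/8) (hW i d) + hscale (3/2) (hs d) - hz i d"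
  by (insert nz[where 'a='a], simp add: hW_def Lm_hs fun_eq_iff algebra_simps)

lemma Lm_v0: "(2::'a::field) \<noteq> 0 \<Longrightarrow> Lm i (hv0 i d :: hidx \<Rightarrow> 'a) = 0"
  by (insert nz[where 'a='a], simp add: hv0_def Lm_add Lm_diff Lm_scale Lm_W Lm_S Lm_A0 Lm_z fun_eq_iff field_simps)

lemma Lm_v2: "(2::'a::field) \<noteq> 0 \<Longrightarrow> Lm i (hv2 i d :: hidx \<Rightarrow> 'a) = hscale 2 (hv2 i d)"
  by (insert nz[where 'a='a], simp add: hv2_def Lm_add Lm_diff Lm_scale Lm_W Lm_S Lm_A0 Lm_z fun_eq_iff field_simps)



definition hF :: "int \<Rightarrow> 'a::field \<Rightarrow> (hidx \<Rightarrow> 'a) \<Rightarrow> (hidx \<Rightarrow> 'a)" where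
  "hF i m y = Lm i y - hscale m y"
definition Qop :: "int \<Rightarrow> (hidx \<Rightarrow> 'a::field) \<Rightarrow> (hidx \<Rightarrow> 'a)" where
  "Qop i x = hF i 0 (hF i 2 (hF i (1/2) (hF i (5/2) x)))"

lemma fs_hmb[simp]: "fs (hmb b c)" by (cases b; cases c) simp_all
lemma fs_Lm[simp]: "fs (Lm i x)" unfolding Lm_def by (rule fs_sum) simp
lemma fs_hF[simp]: "fs x \<Longrightarrow> fs (hF i m x)" by (simp add: hF_def)
lemma fs_Qop[simp]: "fs x \<Longrightarrow> fs (Qop i x)" by (simp add: Qop_def)

lemma hF_add: "fs x \<Longrightarrow> fs y \<Longrightarrow> hF i m (x + y) = hF i m x + hF i m y"
  by (simp add: hF_def Lm_add hscale_add2 algebra_simps)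
lemma hF_scale: "fs x \<Longrightarrow> hF i m (hscale c x) = hscale c (hF i m x)"
  by (simp add: hF_def Lm_scale fun_eq_iff algebra_simps)
lemma Qop_add: "fs x \<Longrightarrow> fs y \<Longrightarrow> Qop i (x + y) = Qop i x + Qop i y"
  by (simp add: Qop_def hF_add)
lemma Qop_scale: "fs x \<Longrightarrow> Qop i (hscale c x) = hscale c (Qop i x)"
  by (simp add: Qop_def hF_scale)
lemma Qop_diff: "fs x \<Longrightarrow> fs y \<Longrightarrow> Qop i (x - y) = Qop i x - Qop i y"
  by (simp add: diff_scale Qop_add Qop_scale)
lemma Qop_zero[simp]: "Qop i 0 = 0" by (simp add: Qop_def hF_def)

lemma Qop_sum: "(\<And>a. a \<in> A \<Longrightarrow> fs (f a)) \<Longrightarrow> Qop i (sum f A) = (\<Sum>a\<in>A. Qop i (f a))"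
proof (induction A rule: infinite_finite_induct)
  case (infinite A) then show ?case using Qop_zero[of i] unfolding zero_fun_def by simp
next
  case empty then show ?case by (simp only: sum.empty Qop_zero)
next
  case (insert a A)
  have fa: "fs (f a)" using insert.prems by simp
  have fA: "fs (sum f A)" using insert.prems by (intro fs_sum) simp
  have IH: "Qop i (sum f A) = (\<Sum>a\<in>A. Qop i (f a))" by (rule insert.IH) (simp add: insert.prems)
  show ?case by (simp only: sum.insert[OF insert.hyps(1,2)] Qop_add[OF fa fA] IH)
qed

lemma Qop_eig:
  assumes "fs v" "Lm i v = hscale m v"
  shows "Qop i v = hscale (m*(m-2)*(m-1/2)*(m-5/2)) v"
proof -
  have h: "hF i n (hscale c v) = hscale (c*(m-n)) v" for n c
    using assms by (simp add: hF_def Lm_scale fun_eq_iff algebra_simps)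
  have "Qop i v = Qop i (hscale 1 v)" by simp
  also have "... = hscale (1*(m-5/2)*(m-1/2)*(m-2)*(m-0)) v" unfolding Qop_def h ..
  also have "1*(m-5/2)*(m-1/2)*(m-2)*(m-0) = m*(m-2)*(m-1/2)*(m-5/2)" by (simp add: ac_simps)
  finally show ?thesis .
qed

lemma Qop_A0: "(2::'a::field) \<noteq> 0 \<Longrightarrow> Qop i (ha i :: hidx \<Rightarrow> 'a) = hscale (3/4) (ha i)"
  using Qop_eig[of "ha i :: hidx \<Rightarrow> 'a" i 1] Lm_A0[of i, where 'a='a]
  by (insert nz[where 'a='a], simp add: field_simps)

lemma Qop_zero_eig: "fs v \<Longrightarrow> Lm i v = hscale m v \<Longrightarrow> m = 0 \<or> m = 2 \<or> m = 1/2 \<or> m = 5/2 \<Longrightarrow> Qop i v = 0"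
  using Qop_eig[of v i m] by auto




lemma Qop_v0: "(2::'a::field) \<noteq> 0 \<Longrightarrow> Qop i (hv0 i d :: hidx \<Rightarrow> 'a) = 0"
  by (rule Qop_zero_eig[where m=0]) (simp_all add: Lm_v0)
lemma Qop_v2: "(2::'a::field) \<noteq> 0 \<Longrightarrow> Qop i (hv2 i d :: hidx \<Rightarrow> 'a) = 0"
  by (rule Qop_zero_eig[where m=2]) (simp_all add: Lm_v2)
lemma Qop_z: "(2::'a::field) \<noteq> 0 \<Longrightarrow> Qop i (hz i d :: hidx \<Rightarrow> 'a) = 0"
  by (rule Qop_zero_eig[where m="5/2"]) (simp_all add: Lm_z)
lemma Qop_adiff: "Qop i (ha j - ha (2*i - j) :: hidx \<Rightarrow> 'a::field) = 0"
  by (rule Qop_zero_eig[where m="1/2"]) (simp_all add: Lm_adiff)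
lemma Qop_pplus: "(2::'a::field) \<noteq> 0 \<Longrightarrow> Qop i (hp r k + hp (-(i+r)) k :: hidx \<Rightarrow> 'a) = 0"
  apply (rule Qop_zero_eig[where m="1/2"])
    apply simp
   apply (erule Lm_pplus)
  apply simp
  done
lemma Qop_pminus: "(2::'a::field) \<noteq> 0 \<Longrightarrow> Qop i (hp r k - hp (-(i+r)) k :: hidx \<Rightarrow> 'a) = 0"
  apply (rule Qop_zero_eig[where m="5/2"])
    apply simp
   apply (erule Lm_pminus)
  apply simp
  done

lemma Qop_hs:
  assumes c2: "(2::'a::field) \<noteq> 0"
  shows "Qop i (hs j :: hidx \<Rightarrow> 'a) = 0"
proof -
  have dec: "hscale (1/16) (hscale 3 (hv2 i j) - hv0 i j) - hz i j = (hs j :: hidx \<Rightarrow> 'a)"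
    using c2 nz[OF c2] by (simp add: hv0_def hv2_def fun_eq_iff field_simps)
  have "Qop i (hs j :: hidx \<Rightarrow> 'a) = Qop i (hscale (1/16) (hscale 3 (hv2 i j) - hv0 i j) - hz i j)"
    by (simp only: dec)
  also have "... = 0" by (simp add: Qop_diff Qop_scale Qop_v0[OF c2] Qop_v2[OF c2] Qop_z[OF c2])
  finally show ?thesis .
qed

lemma hW_eq: "hW i (nat \<bar>i - j\<bar>) = ha j + ha (2*i - j)"
proof (cases "j \<le> i")
  case True
  then have e: "i + int (nat \<bar>i - j\<bar>) = 2*i - j" "i - int (nat \<bar>i - j\<bar>) = j" by auto
  show ?thesis unfolding hW_def by (simp only: e) (rule add.commute)
next
  case False
  then have e: "i + int (nat \<bar>i - j\<bar>) = j" "i - int (nat \<bar>i - j\<bar>) = 2*i - j" by auto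
  show ?thesis unfolding hW_def by (simp only: e)
qed

lemma Qop_ha:
  assumes c2: "(2::'a::field) \<noteq> 0"
  shows "Qop i (ha j :: hidx \<Rightarrow> 'a) = hscale (3/4) (ha i)"
proof -
  let ?d = "nat \<bar>i - j\<bar>"
  have dec: "hscale (1/2) (ha j - ha (2*i - j)) + hscale (1/8) (hv0 i ?d + hv2 i ?d) + ha i = (ha j :: hidx \<Rightarrow> 'a)"
    using c2 nz[OF c2] unfolding hv0_def hv2_def hW_eq by (simp add: fun_eq_iff field_simps)
  have "Qop i (ha j :: hidx \<Rightarrow> 'a) = Qop i (hscale (1/2) (ha j - ha (2*i - j)) + hscale (1/8) (hv0 i ?d + hv2 i ?d) + ha i)"
    by (simp only: dec)
  also have "... = hscale (3/4) (ha i)"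
    by (simp add: Qop_add Qop_scale Qop_v0[OF c2] Qop_v2[OF c2] Qop_adiff Qop_A0[OF c2])
  finally show ?thesis .
qed

lemma Qop_hp:
  assumes c2: "(2::'a::field) \<noteq> 0"
  shows "Qop i (hp r k :: hidx \<Rightarrow> 'a) = 0"
proof -
  define u :: "hidx \<Rightarrow> 'a" where "u = hp (-(i+r)) k"
  have P1: "Qop i (hp r k + u) = 0" unfolding u_def by (rule Qop_pplus[OF c2])
  have P2: "Qop i (hp r k - u) = 0" unfolding u_def by (rule Qop_pminus[OF c2])
  have fu: "fs u" by (simp add: u_def)
  have dec: "hscale (1/2) (hp r k + u) + hscale (1/2) (hp r k - u) = (hp r k :: hidx \<Rightarrow> 'a)"
    using c2 nz[OF c2] by (simp add: fun_eq_iff field_simps)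
  have "Qop i (hp r k :: hidx \<Rightarrow> 'a) = Qop i (hscale (1/2) (hp r k + u) + hscale (1/2) (hp r k - u))"
    by (simp only: dec)
  also have "... = Qop i (hscale (1/2) (hp r k + u)) + Qop i (hscale (1/2) (hp r k - u))"
    by (rule Qop_add) (simp_all add: fu)
  also have "... = hscale (1/2) (Qop i (hp r k + u)) + hscale (1/2) (Qop i (hp r k - u))"
    by (simp only: Qop_scale fs_add fs_diff fs_hp fu)
  also have "... = 0" by (simp only: P1 P2 hscale_zero2 add_0)
  finally show ?thesis .
qed



definition phib :: "hidx \<Rightarrow> 'a::field" where
  "phib b = (case b of HA _ \<Rightarrow> 1 | _ \<Rightarrow> 0)"
definition hphi :: "(hidx \<Rightarrow> 'a::field) \<Rightarrow> 'a" where
  "hphi x = (\<Sum>b\<in>hsupp x. x b * phib b)"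

lemma hphi_super: "finite T \<Longrightarrow> hsupp x \<subseteq> T \<Longrightarrow> hphi x = (\<Sum>b\<in>T. x b * phib b)"
  unfolding hphi_def by (rule sum.mono_neutral_left) (auto simp: hsupp_def)

lemma hphi_add: "fs x \<Longrightarrow> fs y \<Longrightarrow> hphi (x+y) = hphi x + hphi y"
proof -
  assume a: "fs x" "fs y"
  let ?T = "hsupp x \<union> hsupp y"
  have f: "finite ?T" using a by (simp add: fs_def)
  have s: "hsupp x \<subseteq> ?T" "hsupp y \<subseteq> ?T" "hsupp (x+y) \<subseteq> ?T" by (auto simp: hsupp_def)
  show ?thesis
    unfolding hphi_super[OF f s(1)] hphi_super[OF f s(2)] hphi_super[OF f s(3)]
    by (simp add: sum.distrib algebra_simps)
qed

lemma hphi_scale: "fs x \<Longrightarrow> hphi (hscale c x) = c * hphi x"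
proof -
  assume a: "fs x"
  have f: "finite (hsupp x)" using a by (simp add: fs_def)
  have s: "hsupp x \<subseteq> hsupp x" "hsupp (hscale c x) \<subseteq> hsupp x" by (auto simp: hsupp_def)
  show ?thesis
    unfolding hphi_super[OF f s(1)] hphi_super[OF f s(2)]
    by (simp add: sum_distrib_left algebra_simps)
qed

lemma hphi_diff: "fs x \<Longrightarrow> fs y \<Longrightarrow> hphi (x-y) = hphi x - hphi y"
  by (simp add: diff_scale hphi_add hphi_scale)
lemma hphi_zero[simp]: "hphi 0 = 0" by (simp add: hphi_def hsupp_def)

lemma hphi_sum: "(\<And>a. a \<in> A \<Longrightarrow> fs (f a)) \<Longrightarrow> hphi (sum f A) = (\<Sum>a\<in>A. hphi (f a))"
proof (induction A rule: infinite_finite_induct)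
  case (infinite A) then show ?case using hphi_zero unfolding zero_fun_def by simp
next
  case empty then show ?case by (simp only: sum.empty hphi_zero)
next
  case (insert a A)
  have fa: "fs (f a)" using insert.prems by simp
  have fA: "fs (sum f A)" using insert.prems by (intro fs_sum) simp
  have IH: "hphi (sum f A) = (\<Sum>a\<in>A. hphi (f a))" by (rule insert.IH) (simp add: insert.prems)
  show ?case by (simp only: sum.insert[OF insert.hyps(1,2)] hphi_add[OF fa fA] IH)
qed

lemma hphi_hsingle[simp]: "hphi (hsingle b) = phib b"
  by (simp add: hphi_def hsingle_apply)
lemma hphi_ha[simp]: "hphi (ha i) = 1" by (simp add: ha_def phib_def)
lemma hphi_hs[simp]: "hphi (hs j) = 0" by (simp add: hs_def phib_def)
lemma hphi_hp[simp]: "hphi (hp r k) = 0"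
  by (simp add: hp_def phib_def hphi_diff hphi_scale uminus_scale)
lemma hphi_hz[simp]: "hphi (hz r k) = 0" by (simp add: hz_def hphi_diff)

lemma hphi_hmb: "(2::'a::field) \<noteq> 0 \<Longrightarrow> hphi (hmb b c :: hidx \<Rightarrow> 'a) = phib b * phib c"
  by (cases b; cases c) (insert nz[where 'a='a], simp_all add: hphi_add hphi_diff hphi_scale phib_def field_simps)

lemma hphi_hmul:
  assumes c2: "(2::'a::field) \<noteq> 0" and fx: "fs x" and fy: "fs (y :: hidx \<Rightarrow> 'a)"
  shows "hphi (hmul x y) = hphi x * hphi y"
proof -
  have "hphi (hmul x y) = (\<Sum>b\<in>hsupp x. \<Sum>c\<in>hsupp y. hphi (hscale (x b * y c) (hmb b c)))"
    unfolding hmul_def by (simp add: hphi_sum fs_sum)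
  also have "... = (\<Sum>b\<in>hsupp x. \<Sum>c\<in>hsupp y. (x b * phib b) * (y c * phib c))"
    by (simp add: hphi_scale hphi_hmb[OF c2] algebra_simps)
  also have "... = hphi x * hphi y"
    unfolding hphi_def by (simp add: sum_product)
  finally show ?thesis .
qed

lemma Qop_basis:
  assumes c2: "(2::'a::field) \<noteq> 0" and v: "valid_idx b"
  shows "Qop i (hsingle b :: hidx \<Rightarrow> 'a) = hscale (3/4 * phib b) (ha i)"
proof (cases b)
  case (HA j) then show ?thesis using Qop_ha[OF c2, of i j] by (simp add: ha_def phib_def)
next
  case (HS j)
  then have "hsingle b = (hs j :: hidx \<Rightarrow> 'a)" using v by (simp add: hs_def valid_idx_def)
  then show ?thesis using Qop_hs[OF c2, of i j] HS by (simp add: phib_def)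
next
  case (HP r k)
  then have "hsingle b = (hp (if r then 2 else 1) k :: hidx \<Rightarrow> 'a)" using v by (simp add: hp_def valid_idx_def)
  then show ?thesis using Qop_hp[OF c2, of i] HP by (simp add: phib_def)
qed

lemma Hc_fs: "x \<in> Hcarrier \<Longrightarrow> fs x" by (simp add: Hcarrier_def fs_def)

lemma Qop_gen:
  assumes c2: "(2::'a::field) \<noteq> 0" and x: "x \<in> Hcarrier"
  shows "Qop i (x :: hidx \<Rightarrow> 'a) = hscale (3/4 * hphi x) (ha i)"
proof -
  have fx: "fs x" using x by (rule Hc_fs)
  have v: "b \<in> hsupp x \<Longrightarrow> valid_idx b" for b using x by (auto simp: Hcarrier_def hsupp_def)
  have "Qop i x = Qop i (\<Sum>b\<in>hsupp x. hscale (x b) (hsingle b))" using expand[OF fx] by simp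
  also have "... = (\<Sum>b\<in>hsupp x. hscale (x b) (Qop i (hsingle b)))"
    by (simp add: Qop_sum Qop_scale)
  also have "... = (\<Sum>b\<in>hsupp x. hscale (x b) (hscale (3/4 * phib b) (ha i)))"
    by (rule sum.cong) (simp_all add: Qop_basis[OF c2 v])
  also have "... = hscale (3/4 * hphi x) (ha i)"
    by (simp add: fun_eq_iff sum_fun_apply hphi_def sum_distrib_left sum_distrib_right algebra_simps)
  finally show ?thesis .
qed



definition vs :: "(hidx \<Rightarrow> 'a::field) \<Rightarrow> bool" where "vs x = (\<forall>b. x b \<noteq> 0 \<longrightarrow> valid_idx b)"

lemma Hc_iff: "x \<in> Hcarrier \<longleftrightarrow> fs x \<and> vs x" by (simp add: Hcarrier_def fs_def vs_def hsupp_def)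

lemma vs_add[simp]: "vs x \<Longrightarrow> vs y \<Longrightarrow> vs (x+y)" unfolding vs_def by (metis add.right_neutral plus_fun_apply)
lemma vs_diff[simp]: "vs x \<Longrightarrow> vs y \<Longrightarrow> vs (x-y)" unfolding vs_def by (metis diff_self diff_zero minus_apply)
lemma vs_uminus[simp]: "vs x \<Longrightarrow> vs (-x)" by (auto simp: vs_def)
lemma vs_scale[simp]: "vs x \<Longrightarrow> vs (hscale c x)" by (auto simp: vs_def)
lemma vs_zero[simp]: "vs 0" by (auto simp: vs_def)
lemma vs_sum: "(\<And>a. a \<in> A \<Longrightarrow> vs (f a)) \<Longrightarrow> vs (sum f A)"
  by (induction A rule: infinite_finite_induct) auto
lemma vs_ha[simp]: "vs (ha i)" by (auto simp: vs_def ha_def hsingle_def valid_idx_def)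
lemma vs_hs[simp]: "vs (hs j)" by (auto simp: vs_def hs_def hsingle_def valid_idx_def)
lemma vs_hp[simp]: "vs (hp r k)"
  unfolding hp_def by (auto simp: vs_def hsingle_def valid_idx_def)
lemma vs_hz[simp]: "vs (hz r k)" by (simp add: hz_def)
lemma vs_hmb[simp]: "vs (hmb b c)" by (cases b; cases c) simp_all

lemma Hc_hmul: "hmul x y \<in> Hcarrier"
  unfolding Hc_iff hmul_def by (auto intro!: fs_sum vs_sum)

lemma Hc_ha: "ha i \<in> Hcarrier" by (simp add: Hc_iff)

lemma Hc_add: "x \<in> Hcarrier \<Longrightarrow> y \<in> Hcarrier \<Longrightarrow> x + y \<in> Hcarrier" by (simp add: Hc_iff)
lemma Hc_scale: "x \<in> Hcarrier \<Longrightarrow> hscale c x \<in> Hcarrier" by (simp add: Hc_iff)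
lemma Hc_zero: "0 \<in> Hcarrier" by (simp add: Hc_iff)

lemma id_sub: "hideal I \<Longrightarrow> x \<in> I \<Longrightarrow> x \<in> Hcarrier" by (auto simp: hideal_def)
lemma id_add: "hideal I \<Longrightarrow> x \<in> I \<Longrightarrow> y \<in> I \<Longrightarrow> x + y \<in> I" by (auto simp: hideal_def)
lemma id_scale: "hideal I \<Longrightarrow> x \<in> I \<Longrightarrow> hscale c x \<in> I" by (auto simp: hideal_def)
lemma id_diff: "hideal I \<Longrightarrow> x \<in> I \<Longrightarrow> y \<in> I \<Longrightarrow> x - y \<in> I"
  unfolding diff_scale by (intro id_add id_scale)
lemma id_mul: "hideal I \<Longrightarrow> x \<in> I \<Longrightarrow> y \<in> Hcarrier \<Longrightarrow> hmul y x \<in> I" by (auto simp: hideal_def)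
lemma id_zero: "hideal I \<Longrightarrow> 0 \<in> I" by (auto simp: hideal_def)
lemma id_Lm: "hideal I \<Longrightarrow> x \<in> I \<Longrightarrow> Lm i x \<in> I"
  using id_mul[of I x "ha i"] hmul_ha[of x i] id_sub[of I x] Hc_ha[of i] by (simp add: Hc_iff)
lemma id_hF: "hideal I \<Longrightarrow> x \<in> I \<Longrightarrow> hF i m x \<in> I"
  unfolding hF_def by (intro id_diff id_Lm id_scale)
lemma id_Qop: "hideal I \<Longrightarrow> x \<in> I \<Longrightarrow> Qop i x \<in> I"
  unfolding Qop_def by (intro id_hF)
lemma id_sum: "hideal I \<Longrightarrow> (\<And>a. a \<in> A \<Longrightarrow> f a \<in> I) \<Longrightarrow> sum f A \<in> I"
proof (induction A rule: infinite_finite_induct)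
  case (infinite A) then show ?case using id_zero[of I] unfolding zero_fun_def by simp
next
  case empty then show ?case using id_zero[of I] unfolding zero_fun_def by simp
next
  case (insert a A)
  have "f a \<in> I" using insert.prems by simp
  moreover have "sum f A \<in> I" by (rule insert.IH) (simp_all add: insert.prems)
  ultimately show ?case unfolding sum.insert[OF insert.hyps(1,2)] by (rule id_add[OF insert.prems(1)])
qed

lemma axis_whole:
  assumes c2: "(2::'a::field) \<noteq> 0" and c3: "(3::'a) \<noteq> 0"
    and I: "hideal (I :: (hidx \<Rightarrow> 'a) set)" and ai: "ha i \<in> I"
  shows "Hcarrier \<subseteq> I"
proof -
  have A: "ha j \<in> I" for j
  proof -
    have "Qop j (ha i) \<in> I" by (rule id_Qop[OF I ai])
    then have "hscale (3/4) (ha j) \<in> I" using Qop_ha[OF c2, of j i] by simp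
    then have "hscale (4/3) (hscale (3/4) (ha j)) \<in> I" by (rule id_scale[OF I])
    moreover have "hscale (4/3) (hscale (3/4) (ha j)) = (ha j :: hidx \<Rightarrow> 'a)"
    proof -
      have "(12::'a) = 3 * 4" by simp
      then have "(12::'a) \<noteq> 0" using c3 nz[OF c2] by (simp only: mult_eq_0_iff) simp
      then show ?thesis using c3 nz[OF c2] by (simp add: fun_eq_iff)
    qed
    ultimately show ?thesis by simp
  qed
  have SZ: "hs j + hz m j \<in> I" for m j
  proof -
    have "Lm m (ha (m + int j)) \<in> I" by (rule id_Lm[OF I A])
    then have "hscale (1/2) (ha m + ha (m + int j)) + hs j + hz m j \<in> I" by (simp add: Lm_ha)
    then have "(hscale (1/2) (ha m + ha (m + int j)) + hs j + hz m j) - hscale (1/2) (ha m + ha (m + int j)) \<in> I"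
      by (rule id_diff[OF I]) (intro id_scale[OF I] id_add[OF I] A)
    then show ?thesis by (simp add: algebra_simps)
  qed
  have h3: "hp 3 j = (hp 0 j :: hidx \<Rightarrow> 'a)" "hp (-1) j = (hp 2 j :: hidx \<Rightarrow> 'a)" for j
    by (intro hp_cong, simp)+
  have t: "hp 0 j + hp 1 j + hp 2 j = (0 :: hidx \<Rightarrow> 'a)" for j using hp_three[of 0 j] by simp
  have S: "hs j \<in> I" for j
  proof -
    have "(hs j + hz 0 j) + (hs j + hz 1 j) + (hs j + hz 2 j) \<in> I" by (intro id_add[OF I] SZ)
    moreover have "(hs j + hz 0 j) + (hs j + hz 1 j) + (hs j + hz 2 j) = hscale 3 (hs j :: hidx \<Rightarrow> 'a)"
      using h3[of j] t[of j] by (simp add: hz_def fun_eq_iff)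
    ultimately have "hscale (1/3) (hscale 3 (hs j :: hidx \<Rightarrow> 'a)) \<in> I" by (simp add: id_scale[OF I])
    moreover have "hscale (1/3) (hscale 3 (hs j)) = (hs j :: hidx \<Rightarrow> 'a)" using c3 by (simp add: fun_eq_iff)
    ultimately show ?thesis by simp
  qed
  have Z: "hz m j \<in> I" for m j
  proof -
    have "(hs j + hz m j) - hs j \<in> I" by (intro id_diff[OF I] SZ S)
    then show ?thesis by simp
  qed
  have P2: "hp 2 j \<in> I" for j
  proof -
    have "hscale (1/3) (hz 1 j - hz 0 j) \<in> I" by (intro id_scale[OF I] id_diff[OF I] Z)
    moreover have "hscale (1/3) (hz 1 j - hz 0 j) = (hp 2 j :: hidx \<Rightarrow> 'a)"
      using h3[of j] t[of j] c3 by (simp add: hz_def fun_eq_iff) (simp add: fun_eq_iff field_simps, metis add.left_commute minus_unique)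
    ultimately show ?thesis by simp
  qed
  have P1: "hp 1 j \<in> I" for j
  proof -
    have "hz 0 j + hp 2 j \<in> I" by (intro id_add[OF I] Z P2)
    moreover have "hz 0 j + hp 2 j = (hp 1 j :: hidx \<Rightarrow> 'a)"
      using h3[of j] by (simp add: hz_def)
    ultimately show ?thesis by simp
  qed
  have B: "valid_idx b \<Longrightarrow> hsingle b \<in> I" for b
  proof (cases b)
    case (HA j) then show ?thesis using A[of j] by (simp add: ha_def)
  next
    case (HS j)
    moreover assume "valid_idx b"
    ultimately show ?thesis using S[of j] by (simp add: hs_def valid_idx_def)
  next
    case (HP r k)
    moreover assume "valid_idx b"
    ultimately show ?thesis using P1[of k] P2[of k] by (cases r) (simp_all add: hp_def valid_idx_def)
  qed
  show ?thesis
  proof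
    fix x :: "hidx \<Rightarrow> 'a" assume x: "x \<in> Hcarrier"
    have fx: "fs x" using x by (rule Hc_fs)
    have v: "b \<in> hsupp x \<Longrightarrow> valid_idx b" for b using x by (auto simp: Hcarrier_def hsupp_def)
    have "(\<Sum>b\<in>hsupp x. hscale (x b) (hsingle b)) \<in> I"
      by (intro id_sum[OF I] id_scale[OF I] B v)
    then show "x \<in> I" using expand[OF fx] by simp
  qed
qed



lemma hscale_inv: "c \<noteq> 0 \<Longrightarrow> hscale (inverse c) (hscale c v) = (v :: hidx \<Rightarrow> 'a::field)"
  by (simp add: fun_eq_iff)

lemma proper_no_axis:
  assumes c2: "(2::'a::field) \<noteq> 0" and c3: "(3::'a) \<noteq> 0"
    and I: "hideal (I :: (hidx \<Rightarrow> 'a) set)" and p: "I \<noteq> Hcarrier"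
  shows "ha i \<notin> I"
proof
  assume "ha i \<in> I"
  then have "Hcarrier \<subseteq> I" by (rule axis_whole[OF c2 c3 I])
  moreover have "I \<subseteq> Hcarrier" using I by (auto simp: hideal_def)
  ultimately show False using p by blast
qed

lemma proper_phi:
  assumes c2: "(2::'a::field) \<noteq> 0" and c3: "(3::'a) \<noteq> 0"
    and I: "hideal (I :: (hidx \<Rightarrow> 'a) set)" and p: "I \<noteq> Hcarrier" and x: "x \<in> I"
  shows "hphi x = 0"
proof (rule ccontr)
  assume h: "hphi x \<noteq> 0"
  have xc: "x \<in> Hcarrier" using id_sub[OF I x] .
  have "Qop 0 x \<in> I" by (rule id_Qop[OF I x])
  then have "hscale (3/4 * hphi x) (ha 0) \<in> I" using Qop_gen[OF c2 xc] by simp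
  then have "hscale (inverse (3/4 * hphi x)) (hscale (3/4 * hphi x) (ha 0)) \<in> I" by (rule id_scale[OF I])
  moreover have "(3/4 * hphi x) \<noteq> 0" using h c3 nz[OF c2] by simp
  ultimately have "ha 0 \<in> I" by (metis hscale_inv)
  with proper_no_axis[OF c2 c3 I p] show False by blast
qed

definition Kr :: "(hidx \<Rightarrow> 'a::field) set" where "Kr = {x \<in> Hcarrier. hphi x = 0}"

lemma Kr_ideal:
  assumes c2: "(2::'a::field) \<noteq> 0"
  shows "hideal (Kr :: (hidx \<Rightarrow> 'a) set)"
  unfolding hideal_def
proof (intro conjI ballI allI)
  show "Kr \<subseteq> Hcarrier" by (auto simp: Kr_def)
  show "(0::hidx \<Rightarrow> 'a) \<in> Kr" by (simp add: Kr_def Hc_zero)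
next
  fix x y :: "hidx \<Rightarrow> 'a" assume "x \<in> Kr" "y \<in> Kr"
  then show "x + y \<in> Kr" by (auto simp: Kr_def Hc_add hphi_add Hc_fs)
next
  fix c and x :: "hidx \<Rightarrow> 'a" assume "x \<in> Kr"
  then show "hscale c x \<in> Kr" by (auto simp: Kr_def Hc_scale hphi_scale Hc_fs)
next
  fix x y :: "hidx \<Rightarrow> 'a" assume "x \<in> Kr" "y \<in> Hcarrier"
  then show "hmul x y \<in> Kr" "hmul y x \<in> Kr"
    by (auto simp: Kr_def Hc_hmul hphi_hmul[OF c2] Hc_fs)
qed

lemma Kr_noaxis: "ha i \<notin> Kr" by (simp add: Kr_def)

lemma radical_eq:
  assumes c2: "(2::'a::field) \<noteq> 0" and c3: "(3::'a) \<noteq> 0"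
  shows "(hradical :: (hidx \<Rightarrow> 'a) set) = Kr"
proof -
  have sub: "J \<subseteq> Kr" if J: "hideal (J :: (hidx \<Rightarrow> 'a) set)" and na: "\<forall>i. ha i \<notin> J" for J
  proof -
    have p: "J \<noteq> Hcarrier" using na Hc_ha by blast
    show ?thesis using proper_phi[OF c2 c3 J p] id_sub[OF J] by (auto simp: Kr_def)
  qed
  have k1: "hideal (Kr :: (hidx \<Rightarrow> 'a) set)" by (rule Kr_ideal[OF c2])
  have k2: "\<forall>i. ha i \<notin> (Kr :: (hidx \<Rightarrow> 'a) set)" using Kr_noaxis by blast
  have k3: "\<forall>J. hideal J \<and> (\<forall>i. ha i \<notin> J) \<longrightarrow> J \<subseteq> (Kr :: (hidx \<Rightarrow> 'a) set)"
    using sub by blast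
  show ?thesis unfolding hradical_def
  proof (rule the_equality)
    show "hideal (Kr :: (hidx \<Rightarrow> 'a) set) \<and> (\<forall>i. ha i \<notin> (Kr :: (hidx \<Rightarrow> 'a) set)) \<and> (\<forall>J. hideal J \<and> (\<forall>i. ha i \<notin> J) \<longrightarrow> J \<subseteq> (Kr :: (hidx \<Rightarrow> 'a) set))"
      using k1 k2 k3 by simp
    fix R :: "(hidx \<Rightarrow> 'a) set"
    assume R: "hideal R \<and> (\<forall>i. ha i \<notin> R) \<and> (\<forall>J. hideal J \<and> (\<forall>i. ha i \<notin> J) \<longrightarrow> J \<subseteq> R)"
    then have "R \<subseteq> Kr" using sub by blast
    moreover have "Kr \<subseteq> R" using R k1 k2 by blast
    ultimately show "R = Kr" by blast
  qed
qed

theorem corollary5p3: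
  fixes I :: "(hidx \<Rightarrow> 'a::field) set"
  assumes char2: "(2::'a) \<noteq> 0"
    and char3: "(3::'a) \<noteq> 0"
    and ideal: "hideal I"
    and proper: "I \<noteq> Hcarrier"
  shows "I \<subseteq> (hradical :: (hidx \<Rightarrow> 'a) set) \<and> (\<forall>i. ha i \<notin> I)"
proof
  show "I \<subseteq> hradical"
    unfolding radical_eq[OF char2 char3]
    using proper_phi[OF char2 char3 ideal proper] id_sub[OF ideal] by (auto simp: Kr_def)
  show "\<forall>i. ha i \<notin> I" using proper_no_axis[OF char2 char3 ideal proper] by blast
qed

end
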